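(* Let $E,F,H$ be normed spaces over $\mathbb K$ with $H$ spherically complete. Let $f\colon E\to F$ be an immediate linear isometry and $g\colon E\to H$ a linear isometry. Then there exists a linear isometry $h\colon F\to H$ with $h\circ f=g$.
   Context: $\mathbb K$: nontrivially normed field with ultrametric absolute value; normed space over $\mathbb K$: normed vector space with $\|x+y\|\le\max(\|x\|,\|y\|)$. For $x\in F$ and a subspace $V$, $x\perp_m V$ means $\|x\|=\inf_{v\in V}\|x-v\|$. A linear isometry $f\colon E\to F$ is immediate if the only $v\in F$ with $v\perp_m \operatorname{Im}(f)$ is $v=0$. Spherically complete: every decreasing sequence of closed balls (radii $\ge0$) has nonempty intersection. *)

theory Defs
  imports Complex_Main
begin

definition nontriv_ultra_abs :: "('k::field \<Rightarrow> real) \<Rightarrow> bool" where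
  "nontriv_ultra_abs av \<longleftrightarrow>
     (\<forall>a. 0 \<le> av a) \<and> (\<forall>a. av a = 0 \<longleftrightarrow> a = 0) \<and>
     (\<forall>a b. av (a * b) = av a * av b) \<and>
     (\<forall>a b. av (a + b) \<le> max (av a) (av b)) \<and>
     (\<exists>a. av a \<noteq> 0 \<and> av a \<noteq> 1)"

definition ultra_normed_space ::
  "('k::field \<Rightarrow> real) \<Rightarrow> ('k \<Rightarrow> 'v::ab_group_add \<Rightarrow> 'v) \<Rightarrow> ('v \<Rightarrow> real) \<Rightarrow> bool" where
  "ultra_normed_space av sc nm \<longleftrightarrow>
     vector_space sc \<and>
     (\<forall>x. 0 \<le> nm x) \<and> (\<forall>x. nm x = 0 \<longleftrightarrow> x = 0) \<and>
     (\<forall>c x. nm (sc c x) = av c * nm x) \<and>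
     (\<forall>x y. nm (x + y) \<le> max (nm x) (nm y))"

definition linear_isometry ::
  "('k::field \<Rightarrow> 'a::ab_group_add \<Rightarrow> 'a) \<Rightarrow> ('a \<Rightarrow> real) \<Rightarrow>
   ('k \<Rightarrow> 'b::ab_group_add \<Rightarrow> 'b) \<Rightarrow> ('b \<Rightarrow> real) \<Rightarrow> ('a \<Rightarrow> 'b) \<Rightarrow> bool" where
  "linear_isometry sa na sb nb f \<longleftrightarrow>
     Vector_Spaces.linear sa sb f \<and> (\<forall>x. nb (f x) = na x)"

definition perp_m :: "('v::ab_group_add \<Rightarrow> real) \<Rightarrow> 'v \<Rightarrow> 'v set \<Rightarrow> bool" where
  "perp_m nm x V \<longleftrightarrow> nm x = (INF v\<in>V. nm (x - v))"

definition immediate ::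
  "('k::field \<Rightarrow> 'a::ab_group_add \<Rightarrow> 'a) \<Rightarrow> ('a \<Rightarrow> real) \<Rightarrow>
   ('k \<Rightarrow> 'b::ab_group_add \<Rightarrow> 'b) \<Rightarrow> ('b \<Rightarrow> real) \<Rightarrow> ('a \<Rightarrow> 'b) \<Rightarrow> bool" where
  "immediate sa na sb nb f \<longleftrightarrow>
     linear_isometry sa na sb nb f \<and> (\<forall>v. perp_m nb v (range f) \<longrightarrow> v = 0)"

definition cball_n :: "('v::ab_group_add \<Rightarrow> real) \<Rightarrow> 'v \<Rightarrow> real \<Rightarrow> 'v set" where
  "cball_n nm c r = {y. nm (y - c) \<le> r}"

definition spherically_complete :: "('v::ab_group_add \<Rightarrow> real) \<Rightarrow> bool" where
  "spherically_complete nm \<longleftrightarrow>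
     (\<forall>(c::nat \<Rightarrow> 'v) (r::nat \<Rightarrow> real).
        (\<forall>n. 0 \<le> r n) \<and> (\<forall>n. cball_n nm (c (Suc n)) (r (Suc n)) \<subseteq> cball_n nm (c n) (r n))
        \<longrightarrow> (\<Inter>n. cball_n nm (c n) (r n)) \<noteq> {})"

end

theory Submission imports Defs begin

lemma av_neg_one:
  assumes "nontriv_ultra_abs av" shows "av (-1) = 1"
proof -
  have nn: "\<And>a. 0 \<le> av a" and z: "\<And>a. av a = 0 \<longleftrightarrow> a = 0"
    and m: "\<And>a b. av (a*b) = av a * av b" using assms unfolding nontriv_ultra_abs_def by auto
  have "av 1 = av 1 * av 1" using m[of 1 1] by simp
  moreover have "av 1 \<noteq> 0" using z by simp
  ultimately have a1: "av 1 = 1" by (metis mult_cancel_left1)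
  have "av (-1) * av (-1) = 1" using m[of "-1" "-1"] a1 by simp
  then have "(av (-1) - 1) * (av (-1) + 1) = 0" by (simp add: algebra_simps)
  moreover have "av (-1) + 1 \<noteq> 0" using nn[of "-1"] by linarith
  ultimately show ?thesis by simp
qed

locale ultra = vector_space sc for sc :: "'k::field \<Rightarrow> 'v::ab_group_add \<Rightarrow> 'v" +
  fixes av :: "'k \<Rightarrow> real" and nm :: "'v \<Rightarrow> real"
  assumes av: "nontriv_ultra_abs av" and uns: "ultra_normed_space av sc nm"
begin

lemma nn: "0 \<le> nm x" and nz: "nm x = 0 \<longleftrightarrow> x = 0" and nsc: "nm (sc c x) = av c * nm x"
  and tri: "nm (x + y) \<le> max (nm x) (nm y)"
  using uns unfolding ultra_normed_space_def by auto

lemma nneg: "nm (- x) = nm x"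
proof -
  have "- x = sc (-1) x" by simp
  then show ?thesis using nsc[of "-1" x] av_neg_one[OF av] by simp
qed

lemma ncomm: "nm (x - y) = nm (y - x)"
  using nneg[of "x - y"] by simp

lemma tri_diff: "nm (x - y) \<le> max (nm x) (nm y)"
  using tri[of x "- y"] nneg[of y] by simp

lemma tri3: "nm (x - z) \<le> max (nm (x - y)) (nm (y - z))"
  using tri[of "x - y" "y - z"] by simp

lemma strict: assumes "nm u < nm v" shows "nm (v - u) = nm v"
proof -
  have "nm v \<le> max (nm (v - u)) (nm u)" using tri[of "v - u" u] by simp
  then have "nm v \<le> nm (v - u)" using assms by linarith
  moreover have "nm (v - u) \<le> nm v" using tri_diff[of v u] assms by linarith
  ultimately show ?thesis by linarith
qed

end

locale setting =
  fixes av :: "'k::field \<Rightarrow> real"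
    and sE :: "'k \<Rightarrow> 'e::ab_group_add \<Rightarrow> 'e" and nE :: "'e \<Rightarrow> real"
    and sF :: "'k \<Rightarrow> 'f::ab_group_add \<Rightarrow> 'f" and nF :: "'f \<Rightarrow> real"
    and sH :: "'k \<Rightarrow> 'h::ab_group_add \<Rightarrow> 'h" and nH :: "'h \<Rightarrow> real"
    and f :: "'e \<Rightarrow> 'f" and g :: "'e \<Rightarrow> 'h"
  assumes av: "nontriv_ultra_abs av"
    and uE: "ultra_normed_space av sE nE"
    and uF: "ultra_normed_space av sF nF"
    and uH: "ultra_normed_space av sH nH"
    and sc: "spherically_complete nH"
    and imm: "immediate sE nE sF nF f"
    and lig: "linear_isometry sE nE sH nH g"
begin

lemma ultF: "ultra sF av nF"
  using av uF unfolding ultra_def ultra_axioms_def ultra_normed_space_def by auto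
lemma ultH: "ultra sH av nH"
  using av uH unfolding ultra_def ultra_axioms_def ultra_normed_space_def by auto
lemma mF: "module sF" using uF unfolding ultra_normed_space_def by (simp add: module_iff_vector_space)
lemma mH: "module sH" using uH unfolding ultra_normed_space_def by (simp add: module_iff_vector_space)

lemmas UF_nn = ultra.nn[OF ultF] and UF_nz = ultra.nz[OF ultF] and UF_nsc = ultra.nsc[OF ultF]
  and UF_tri_diff = ultra.tri_diff[OF ultF] and UF_strict = ultra.strict[OF ultF]
  and UF_tri3 = ultra.tri3[OF ultF] and UF_ncomm = ultra.ncomm[OF ultF]
lemmas UH_nn = ultra.nn[OF ultH] and UH_nz = ultra.nz[OF ultH] and UH_nsc = ultra.nsc[OF ultH]
  and UH_tri_diff = ultra.tri_diff[OF ultH] and UH_strict = ultra.strict[OF ultH]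
  and UH_tri3 = ultra.tri3[OF ultH] and UH_ncomm = ultra.ncomm[OF ultH]
lemmas UF_scale_right_diff_distrib = module.scale_right_diff_distrib[OF mF]
  and UF_scale_right_distrib = module.scale_right_distrib[OF mF]
  and UF_scale_left_distrib = module.scale_left_distrib[OF mF]
lemmas UH_scale_right_diff_distrib = module.scale_right_diff_distrib[OF mH]
  and UH_scale_right_distrib = module.scale_right_distrib[OF mH]
  and UH_scale_left_distrib = module.scale_left_distrib[OF mH]
lemma mE: "module sE" using uE unfolding ultra_normed_space_def by (simp add: module_iff_vector_space)
lemmas E_simps[simp] = module.scale_zero_left[OF mE] module.scale_zero_right[OF mE]
lemmas F_simps[simp] = module.scale_zero_left[OF mF] module.scale_one[OF mF]
  module.scale_minus_left[OF mF] module.scale_scale[OF mF] module.scale_zero_right[OF mF]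
  module.scale_minus_right[OF mF]
lemmas H_simps[simp] = module.scale_zero_left[OF mH] module.scale_one[OF mH]
  module.scale_minus_left[OF mH] module.scale_scale[OF mH] module.scale_zero_right[OF mH]
  module.scale_minus_right[OF mH]

lemma f_add: "f (a + b) = f a + f b" and f_sc: "f (sE c a) = sF c (f a)" and f_iso: "nF (f a) = nE a"
  using imm unfolding immediate_def linear_isometry_def by (auto simp: Vector_Spaces.linear_iff)
lemma g_add: "g (a + b) = g a + g b" and g_sc: "g (sE c a) = sH c (g a)" and g_iso: "nH (g a) = nE a"
  using lig unfolding linear_isometry_def by (auto simp: Vector_Spaces.linear_iff)
lemma f0: "f 0 = 0" using f_sc[of 0 0] by simp
lemma g0: "g 0 = 0" using g_sc[of 0 0] by simp

definition Good where
  "Good = {G. (\<forall>e. (f e, g e) \<in> G) \<and>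
     (\<forall>a b a' b'. (a,b) \<in> G \<longrightarrow> (a',b') \<in> G \<longrightarrow> (a + a', b + b') \<in> G) \<and>
     (\<forall>a b c. (a,b) \<in> G \<longrightarrow> (sF c a, sH c b) \<in> G) \<and>
     (\<forall>a b. (a,b) \<in> G \<longrightarrow> nH b = nF a)}"

lemma GoodD:
  assumes "G \<in> Good"
  shows "(f e, g e) \<in> G"
    and "(a,b) \<in> G \<Longrightarrow> (a',b') \<in> G \<Longrightarrow> (a + a', b + b') \<in> G"
    and "(a,b) \<in> G \<Longrightarrow> (sF c a, sH c b) \<in> G"
    and "(a,b) \<in> G \<Longrightarrow> nH b = nF a"
  using assms unfolding Good_def by blast+

lemma Good_zero: "G \<in> Good \<Longrightarrow> (0, 0) \<in> G"
  using GoodD(1)[of G 0] f0 g0 by simp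

lemma Good_diff:
  assumes "G \<in> Good" "(a,b) \<in> G" "(a',b') \<in> G"
  shows "(a - a', b - b') \<in> G" and "nH (b - b') = nF (a - a')"
proof -
  have "(sF (-1) a', sH (-1) b') \<in> G" using GoodD(3) assms by blast
  then have "(a + sF (-1) a', b + sH (-1) b') \<in> G" using GoodD(2) assms by blast
  then show "(a - a', b - b') \<in> G" by simp
  then show "nH (b - b') = nF (a - a')" using GoodD(4) assms by blast
qed

lemma Good_fun:
  assumes "G \<in> Good" "(a,b) \<in> G" "(a,b') \<in> G" shows "b = b'"
  using Good_diff(2)[OF assms] UH_nz UF_nz by (metis right_minus_eq)

lemma Good_nonempty: "Good \<noteq> {}"
proof -
  have "range (\<lambda>e. (f e, g e)) \<in> Good"
    unfolding Good_def
  proof (intro CollectI conjI allI impI)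
    fix a b a' b' assume "(a,b) \<in> range (\<lambda>e. (f e, g e))" "(a',b') \<in> range (\<lambda>e. (f e, g e))"
    then obtain e e' where "a = f e" "b = g e" "a' = f e'" "b' = g e'" by blast
    then show "(a + a', b + b') \<in> range (\<lambda>e. (f e, g e))"
      by (intro image_eqI[where x="e + e'"]) (simp_all add: f_add g_add)
  next
    fix a b c assume "(a,b) \<in> range (\<lambda>e. (f e, g e))"
    then obtain e where "a = f e" "b = g e" by blast
    then show "(sF c a, sH c b) \<in> range (\<lambda>e. (f e, g e))"
      by (intro image_eqI[where x="sE c e"]) (simp_all add: f_sc g_sc)
  next
    fix a b assume "(a,b) \<in> range (\<lambda>e. (f e, g e))"
    then obtain e where "a = f e" "b = g e" by blast
    then show "nH b = nF a" by (simp add: f_iso g_iso)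
  qed auto
  then show ?thesis by blast
qed

lemma Good_chain:
  assumes "C \<noteq> {}" "subset.chain Good C" shows "\<Union>C \<in> Good"
proof -
  have CG: "C \<subseteq> Good" and ch: "\<And>X Y. X \<in> C \<Longrightarrow> Y \<in> C \<Longrightarrow> X \<subseteq> Y \<or> Y \<subseteq> X"
    using assms(2) unfolding subset_chain_def by auto
  obtain X0 where X0: "X0 \<in> C" using assms(1) by blast
  show ?thesis unfolding Good_def
  proof (intro CollectI conjI allI impI)
    fix e show "(f e, g e) \<in> \<Union>C" using X0 CG GoodD(1) by blast
  next
    fix a b a' b' assume "(a,b) \<in> \<Union>C" "(a',b') \<in> \<Union>C"
    then obtain X Y where XY: "X \<in> C" "Y \<in> C" "(a,b) \<in> X" "(a',b') \<in> Y" by blast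
    show "(a + a', b + b') \<in> \<Union>C"
    proof (cases "X \<subseteq> Y")
      case True then show ?thesis using XY CG GoodD(2)[of Y a b a' b'] by blast
    next
      case False then have "Y \<subseteq> X" using ch XY by blast
      then show ?thesis using XY CG GoodD(2)[of X a b a' b'] by blast
    qed
  next
    fix a b c assume "(a,b) \<in> \<Union>C"
    then show "(sF c a, sH c b) \<in> \<Union>C" using CG GoodD(3) by blast
  next
    fix a b assume "(a,b) \<in> \<Union>C"
    then show "nH b = nF a" using CG GoodD(4) by blast
  qed
qed


lemma key:
  assumes G: "G \<in> Good" and x: "x \<notin> fst ` G"
  shows "\<exists>y. \<forall>a b. (a,b) \<in> G \<longrightarrow> nH (y - b) = nF (x - a)"
proof -
  define r where "r p = nF (x - fst p)" for p :: "'f \<times> 'h"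
  define \<rho> where "\<rho> = Inf (r ` G)"
  have ne: "G \<noteq> {}" using Good_zero[OF G] by blast
  have bdd: "bdd_below (r ` G)" unfolding bdd_below_def r_def using UF_nn by blast
  have rho_le: "\<rho> \<le> r p" if "p \<in> G" for p
    unfolding \<rho>_def using bdd that by (simp add: cInf_lower)
  have nomin: "\<exists>q\<in>G. r q < r p" if p: "p \<in> G" for p
  proof -
    obtain a b where ab: "p = (a,b)" by (cases p)
    define v where "v = x - a"
    have "v \<noteq> 0"
    proof
      assume "v = 0"
      then have "x = a" by (simp add: v_def)
      then show False using x p ab by (metis fst_conv image_eqI)
    qed
    then have np: "\<not> perp_m nF v (range f)" using imm unfolding immediate_def by blast
    have bd2: "bdd_below ((\<lambda>u. nF (v - u)) ` range f)" unfolding bdd_below_def using UF_nn by blast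
    have "(INF u\<in>range f. nF (v - u)) \<le> nF (v - f 0)"
      using bd2 by (intro cINF_lower) auto
    then have "(INF u\<in>range f. nF (v - u)) < nF v" using np f0 unfolding perp_m_def by auto
    then obtain u where u: "u \<in> range f" "nF (v - u) < nF v"
      using bd2 by (subst (asm) cINF_less_iff) auto
    then obtain e where e: "u = f e" by blast
    have "(a + f e, b + g e) \<in> G" using GoodD(2)[OF G, of a b "f e" "g e"] GoodD(1)[OF G, of e] p ab by simp
    moreover have "r (a + f e, b + g e) < r p"
    proof -
      have "x - (a + f e) = v - u" using e unfolding v_def by (simp add: diff_diff_eq)
      then show ?thesis using u ab v_def unfolding r_def by (metis fst_conv)
    qed
    ultimately show ?thesis by blast
  qed
  have rho_lt: "\<rho> < r p" if pG: "p \<in> G" for p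
  proof -
    obtain q where "q \<in> G" "r q < r p" using nomin[OF pG] by blast
    then show ?thesis using rho_le[of q] by linarith
  qed
  have approx: "\<exists>q\<in>G. r q < \<rho> + \<epsilon>" if "\<epsilon> > 0" for \<epsilon>
  proof -
    have "Inf (r ` G) < \<rho> + \<epsilon>" using that \<rho>_def by simp
    then show ?thesis using ne by (subst (asm) cInf_less_iff) (auto simp: bdd)
  qed
  have step: "\<exists>q. q \<in> G \<and> r q < r p \<and> r q < \<rho> + \<epsilon>" if pe: "p \<in> G" "\<epsilon> > 0" for p \<epsilon>
  proof -
    obtain q where "q \<in> G" "r q < \<rho> + min (r p - \<rho>) \<epsilon>"
      using approx[of "min (r p - \<rho>) \<epsilon>"] rho_lt[OF pe(1)] pe(2) by auto
    moreover from this(2) have "r q < r p \<and> r q < \<rho> + \<epsilon>" by (simp add: min_def split: if_splits)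
    ultimately show ?thesis by blast
  qed
  define s where "s = rec_nat (SOME q. q \<in> G \<and> r q < \<rho> + 1)
      (\<lambda>n p. SOME q. q \<in> G \<and> r q < r p \<and> r q < \<rho> + 1 / real (Suc n + 1))"
  have s0: "s 0 = (SOME q. q \<in> G \<and> r q < \<rho> + 1)" by (simp add: s_def)
  have sS: "s (Suc n) = (SOME q. q \<in> G \<and> r q < r (s n) \<and> r q < \<rho> + 1 / real (Suc n + 1))" for n
    by (simp add: s_def)
  have sG: "s n \<in> G \<and> r (s n) < \<rho> + 1 / real (n + 1)" for n
  proof (induction n)
    case 0
    have "\<exists>q. q \<in> G \<and> r q < \<rho> + 1" using approx[of 1] by auto
    from someI_ex[OF this] show ?case unfolding s0 by simp
  next
    case (Suc n)
    have "\<exists>q. q \<in> G \<and> r q < r (s n) \<and> r q < \<rho> + 1 / real (Suc n + 1)"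
      using step[of "s n" "1 / real (Suc n + 1)"] Suc by auto
    from someI_ex[OF this] show ?case unfolding sS by auto
  qed
  have sdec: "r (s (Suc n)) < r (s n)" for n
  proof -
    have "\<exists>q. q \<in> G \<and> r q < r (s n) \<and> r q < \<rho> + 1 / real (Suc n + 1)"
      using step[of "s n" "1 / real (Suc n + 1)"] sG by auto
    from someI_ex[OF this] show ?thesis unfolding sS by auto
  qed
  have near: "nH (snd q - snd p) \<le> r p" if "p \<in> G" "q \<in> G" "r q \<le> r p" for p q
  proof -
    have "nH (snd q - snd p) = nF (fst q - fst p)"
      using Good_diff(2)[OF G, of "fst q" "snd q" "fst p" "snd p"] that by simp
    also have "\<dots> = nF ((x - fst p) - (x - fst q))" by (simp add: algebra_simps)
    also have "\<dots> \<le> max (nF (x - fst p)) (nF (x - fst q))" by (rule UF_tri_diff)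
    finally show ?thesis using that(3) unfolding r_def by simp
  qed
  have near_strict: "nH (snd q - snd p) = r p" if "p \<in> G" "q \<in> G" "r q < r p" for p q
  proof -
    have "nH (snd q - snd p) = nF (fst q - fst p)"
      using Good_diff(2)[OF G, of "fst q" "snd q" "fst p" "snd p"] that by simp
    also have "\<dots> = nF ((x - fst p) - (x - fst q))" by (simp add: algebra_simps)
    also have "\<dots> = nF (x - fst p)" using that(3) unfolding r_def by (intro UF_strict) simp
    finally show ?thesis unfolding r_def .
  qed
  define c where "c n = snd (s n)" for n
  define rad where "rad n = r (s n)" for n
  have "(\<Inter>n. cball_n nH (c n) (rad n)) \<noteq> {}"
  proof -
    have "\<forall>n. 0 \<le> rad n" unfolding rad_def r_def using UF_nn by blast
    moreover have "\<forall>n. cball_n nH (c (Suc n)) (rad (Suc n)) \<subseteq> cball_n nH (c n) (rad n)"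
    proof (intro allI subsetI)
      fix n z assume "z \<in> cball_n nH (c (Suc n)) (rad (Suc n))"
      then have z: "nH (z - c (Suc n)) \<le> rad (Suc n)" unfolding cball_n_def by simp
      have "nH (c (Suc n) - c n) \<le> rad n" unfolding c_def rad_def
        using near[of "s n" "s (Suc n)"] sG sdec[of n] by simp
      then have "nH (z - c n) \<le> rad n"
        using UH_tri3[of z "c n" "c (Suc n)"] z sdec[of n] unfolding rad_def by simp
      then show "z \<in> cball_n nH (c n) (rad n)" unfolding cball_n_def by simp
    qed
    ultimately show ?thesis using sc[unfolded spherically_complete_def, rule_format, of rad c] by blast
  qed
  then obtain y where y: "\<And>n. nH (y - c n) \<le> rad n" unfolding cball_n_def by blast
  have "nH (y - b) = nF (x - a)" if ab: "(a,b) \<in> G" for a b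
  proof -
    have "\<rho> < r (a,b)" using rho_lt ab by blast
    then obtain n where n: "inverse (real (Suc n)) < r (a,b) - \<rho>"
      using reals_Archimedean[of "r (a,b) - \<rho>"] by auto
    have lt: "rad n < r (a,b)"
    proof -
      have "r (s n) < \<rho> + 1 / real (n + 1)" using sG by blast
      moreover have "1 / real (n + 1) = inverse (real (Suc n))" by (simp add: inverse_eq_divide)
      ultimately show ?thesis using n unfolding rad_def by linarith
    qed
    have eq: "nH (c n - b) = r (a,b)" unfolding c_def
      using near_strict[of "(a,b)" "s n"] ab sG lt unfolding rad_def by simp
    have "nH (y - b) \<le> max (nH (y - c n)) (nH (c n - b))" by (rule UH_tri3)
    then have le: "nH (y - b) \<le> r (a,b)" using eq y[of n] lt by simp
    have "nH (c n - b) \<le> max (nH (c n - y)) (nH (y - b))" by (rule UH_tri3)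
    moreover have "nH (c n - y) < r (a,b)" using y[of n] lt UH_ncomm[of "c n" y] by simp
    ultimately have "r (a,b) \<le> nH (y - b)" using eq by simp
    with le show ?thesis unfolding r_def by simp
  qed
  then show ?thesis by blast
qed


lemma extend:
  assumes G: "G \<in> Good" and y: "\<forall>a b. (a,b) \<in> G \<longrightarrow> nH (y - b) = nF (x - a)"
  shows "{(a + sF c x, b + sH c y) | a b c. (a,b) \<in> G} \<in> Good" (is "?G' \<in> Good")
proof -
  have iso: "nH (b + sH c y) = nF (a + sF c x)" if ab: "(a,b) \<in> G" for a b c
  proof (cases "c = 0")
    case True then show ?thesis using GoodD(4)[OF G ab] by simp
  next
    case False
    have ab': "(sF (-1/c) a, sH (-1/c) b) \<in> G" using GoodD(3)[OF G ab] .
    have cc: "c * (-1/c) = -1" using False by simp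
    have e1: "a + sF c x = sF c (x - sF (-1/c) a)"
      using False by (simp add: UF_scale_right_diff_distrib UF_scale_right_distrib add.commute)
    have e2: "b + sH c y = sH c (y - sH (-1/c) b)"
      using False by (simp add: UH_scale_right_diff_distrib UH_scale_right_distrib add.commute)
    have yy: "nH (y - sH (-1/c) b) = nF (x - sF (-1/c) a)" using y ab' by blast
    show ?thesis by (simp only: e1 e2 UF_nsc UH_nsc yy)
  qed
  show ?thesis unfolding Good_def
  proof (rule CollectI, intro conjI allI impI)
    fix e
    have "(f e, g e) = (f e + sF 0 x, g e + sH 0 y)" by simp
    then show "(f e, g e) \<in> ?G'" using GoodD(1)[OF G, of e] by blast
  next
    fix a b a' b' assume "(a,b) \<in> ?G'" "(a',b') \<in> ?G'"
    then obtain a1 b1 c1 a2 b2 c2 where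
      h1: "(a,b) = (a1 + sF c1 x, b1 + sH c1 y)" "(a1,b1) \<in> G" and
      h2: "(a',b') = (a2 + sF c2 x, b2 + sH c2 y)" "(a2,b2) \<in> G" by blast
    have "(a1 + a2, b1 + b2) \<in> G" using GoodD(2)[OF G h1(2) h2(2)] .
    moreover have "(a + a', b + b') = ((a1+a2) + sF (c1+c2) x, (b1+b2) + sH (c1+c2) y)"
      using h1(1) h2(1) by (simp add: UF_scale_left_distrib UH_scale_left_distrib algebra_simps)
    ultimately show "(a + a', b + b') \<in> ?G'" by blast
  next
    fix a b k assume "(a,b) \<in> ?G'"
    then obtain a1 b1 c1 where
      h1: "(a,b) = (a1 + sF c1 x, b1 + sH c1 y)" "(a1,b1) \<in> G" by blast
    have "(sF k a1, sH k b1) \<in> G" using GoodD(3)[OF G h1(2)] .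
    moreover have "(sF k a, sH k b) = (sF k a1 + sF (k*c1) x, sH k b1 + sH (k*c1) y)"
      using h1(1) by (simp add: UF_scale_right_distrib UH_scale_right_distrib)
    ultimately show "(sF k a, sH k b) \<in> ?G'" by blast
  next
    fix a b assume "(a,b) \<in> ?G'"
    then obtain a1 b1 c1 where
      h1: "(a,b) = (a1 + sF c1 x, b1 + sH c1 y)" "(a1,b1) \<in> G" by blast
    then show "nH b = nF a" using iso[OF h1(2), of c1] by simp
  qed
qed

lemma main: "\<exists>h. linear_isometry sF nF sH nH h \<and> h \<circ> f = g"
proof -
  obtain M where M: "M \<in> Good" and mx: "\<forall>X\<in>Good. M \<subseteq> X \<longrightarrow> X = M"
    using subset_Zorn_nonempty[OF Good_nonempty Good_chain] by blast
  have dom: "x \<in> fst ` M" for x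
  proof (rule ccontr)
    assume x: "x \<notin> fst ` M"
    obtain y where y: "\<forall>a b. (a,b) \<in> M \<longrightarrow> nH (y - b) = nF (x - a)" using key[OF M x] by blast
    let ?G' = "{(a + sF c x, b + sH c y) | a b c. (a,b) \<in> M}"
    have G': "?G' \<in> Good" by (rule extend[OF M y])
    have "M \<subseteq> ?G'"
    proof
      fix p assume p: "p \<in> M"
      obtain a b where ab: "p = (a,b)" by (cases p)
      have abM: "(a,b) \<in> M" using p ab by simp
      show "p \<in> ?G'" unfolding ab
        by (intro CollectI exI[of _ a] exI[of _ b] exI[of _ 0]) (simp add: abM)
    qed
    then have "?G' = M" by (rule mx[rule_format, OF G'])
    moreover have "(x, y) \<in> ?G'"
    proof -
      have "(x, y) = (0 + sF 1 x, 0 + sH 1 y)" by simp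
      then show ?thesis using Good_zero[OF M] by blast
    qed
    ultimately show False using x by force
  qed
  define h where "h x = (SOME b. (x,b) \<in> M)" for x
  have hM: "(x, h x) \<in> M" for x
  proof -
    obtain b where "(x,b) \<in> M" using dom[of x] by force
    then show ?thesis unfolding h_def by (rule someI)
  qed
  have hu: "h x = b" if "(x,b) \<in> M" for x b
    using Good_fun[OF M hM[of x] that] .
  have vF: "vector_space sF" using uF unfolding ultra_normed_space_def by blast
  have vH: "vector_space sH" using uH unfolding ultra_normed_space_def by blast
  have "Vector_Spaces.linear sF sH h"
    unfolding Vector_Spaces.linear_iff
  proof (intro conjI allI vF vH)
    fix x y show "h (x + y) = h x + h y"
      using hu GoodD(2)[OF M hM[of x] hM[of y]] by blast
  next
    fix c x show "h (sF c x) = sH c (h x)"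
      using hu GoodD(3)[OF M hM[of x]] by blast
  qed
  moreover have "\<forall>x. nH (h x) = nF x" using GoodD(4)[OF M hM] by blast
  moreover have "h \<circ> f = g" using hu GoodD(1)[OF M] by fastforce
  ultimately show ?thesis unfolding linear_isometry_def by blast
qed

end

theorem lemma6p2:
  fixes av :: "'k::field \<Rightarrow> real"
    and sE :: "'k \<Rightarrow> 'e::ab_group_add \<Rightarrow> 'e" and nE :: "'e \<Rightarrow> real"
    and sF :: "'k \<Rightarrow> 'f::ab_group_add \<Rightarrow> 'f" and nF :: "'f \<Rightarrow> real"
    and sH :: "'k \<Rightarrow> 'h::ab_group_add \<Rightarrow> 'h" and nH :: "'h \<Rightarrow> real"
    and f :: "'e \<Rightarrow> 'f" and g :: "'e \<Rightarrow> 'h"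
  assumes "nontriv_ultra_abs av"
    and "ultra_normed_space av sE nE"
    and "ultra_normed_space av sF nF"
    and "ultra_normed_space av sH nH"
    and "spherically_complete nH"
    and "immediate sE nE sF nF f"
    and "linear_isometry sE nE sH nH g"
  shows "\<exists>h. linear_isometry sF nF sH nH h \<and> h \<circ> f = g"
proof -
  interpret setting av sE nE sF nF sH nH f g
    using assms by (unfold_locales)
  show ?thesis by (rule main)
qed

end
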